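(* In the setting below, the minimum distance $d$ of $\mathrm{UB}(a,\ell)$ satisfies $$d\le\min\{\mathrm{wt}(a)^{\ell}+1,\ \mathrm{wt}(h)\}.$$
   Context: Setting. Let $n\ge 2$ and $\mathcal R_n=\mathbb F_2[x]/(x^n-1)$. Identifications and weights. Vectors in $\mathbb F_2^n$ are identified with elements of $\mathcal R_n$ via $c\mapsto\sum_ic_ix^i$. $\mathrm{wt}(g)$ is the number of nonzero coefficients of the degree-$<n$ representative of $g$. $\mathrm{Circ}(g)$ is the $n\times n$ binary matrix whose $i$-th row is the coefficient vector of $x^ig(x)$. Code data. Let $a(x)\in\mathbb F_2[x]$ with $a\mid x^n-1$ and $1\le r:=\deg a<n$. Let $\ell\ge1$, $t=2^\ell$, $b=a^t\in\mathcal R_n$, and $h=(x^n-1)/a\in\mathbb F_2[x]$. The univariate bicycle code $\mathrm{UB}(a,\ell)$ is the CSS code on $2n$ qubits with $H_X=[\mathrm{Circ}(a),\mathrm{Circ}(b)]$ and $H_Z=[\mathrm{Circ}(b)^{\mathsf T},\mathrm{Circ}(a)^{\mathsf T}]$. Distances. With $\ker(H)=\{c:Hc^{\mathsf T}=0\}$ and $\mathrm{rs}$ the row space, define $d_Z=\min\{\mathrm{wt}(v):v\in\ker(H_Z)\setminus\mathrm{rs}(H_X)\}$, define $d_X=\min\{\mathrm{wt}(v):v\in\ker(H_X)\setminus\mathrm{rs}(H_Z)\}$, and set $d=\min(d_X,d_Z)$. Here the weight of a vector in $\mathbb F_2^{2n}$ is its number of nonzero entries. *)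

theory Defs
  imports "HOL-Library.Z2" "HOL-Computational_Algebra.Polynomial"
begin

text \<open>F_2 is the type bit. Elements of R_n = F_2[x]/(x^n - 1) are represented by
  polynomials; the canonical representative is the remainder modulo x^n - 1.\<close>

definition xn1 :: "nat \<Rightarrow> bit poly" where
  "xn1 n = monom 1 n - 1"

definition rep :: "nat \<Rightarrow> bit poly \<Rightarrow> bit poly" where
  "rep n g = g mod xn1 n"

definition wt :: "nat \<Rightarrow> bit poly \<Rightarrow> nat" where
  "wt n g = card {i. i < n \<and> coeff (rep n g) i \<noteq> 0}"

definition Circ :: "nat \<Rightarrow> bit poly \<Rightarrow> nat \<Rightarrow> nat \<Rightarrow> bit" where
  "Circ n g i j = coeff (rep n (monom 1 i * g)) j"

text \<open>Binary matrices with m rows and N columns are functions nat => nat => bit used on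
  i < m, j < N; vectors of length N are functions nat => bit, considered on j < N.\<close>

definition HX :: "nat \<Rightarrow> bit poly \<Rightarrow> bit poly \<Rightarrow> nat \<Rightarrow> nat \<Rightarrow> bit" where
  "HX n a b i j = (if j < n then Circ n a i j else Circ n b i (j - n))"

definition HZ :: "nat \<Rightarrow> bit poly \<Rightarrow> bit poly \<Rightarrow> nat \<Rightarrow> nat \<Rightarrow> bit" where
  "HZ n a b i j = (if j < n then Circ n b j i else Circ n a (j - n) i)"

definition vecs :: "nat \<Rightarrow> (nat \<Rightarrow> bit) set" where
  "vecs N = {v. \<forall>j. N \<le> j \<longrightarrow> v j = 0}"

definition kern :: "nat \<Rightarrow> nat \<Rightarrow> (nat \<Rightarrow> nat \<Rightarrow> bit) \<Rightarrow> (nat \<Rightarrow> bit) set" where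
  "kern m N H = {v \<in> vecs N. \<forall>i<m. (\<Sum>j<N. H i j * v j) = 0}"

definition rowsp :: "nat \<Rightarrow> nat \<Rightarrow> (nat \<Rightarrow> nat \<Rightarrow> bit) \<Rightarrow> (nat \<Rightarrow> bit) set" where
  "rowsp m N H = {v \<in> vecs N. \<exists>c :: nat \<Rightarrow> bit. \<forall>j<N. v j = (\<Sum>i<m. c i * H i j)}"

definition hw :: "nat \<Rightarrow> (nat \<Rightarrow> bit) \<Rightarrow> nat" where
  "hw N v = card {j. j < N \<and> v j \<noteq> 0}"

definition UB_b :: "nat \<Rightarrow> bit poly \<Rightarrow> nat \<Rightarrow> bit poly" where
  "UB_b n a l = rep n (a ^ (2 ^ l))"

definition dZ :: "nat \<Rightarrow> bit poly \<Rightarrow> nat \<Rightarrow> nat" where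
  "dZ n a l = (let b = UB_b n a l in
     Inf (hw (2*n) ` (kern n (2*n) (HZ n a b) - rowsp n (2*n) (HX n a b))))"

definition dX :: "nat \<Rightarrow> bit poly \<Rightarrow> nat \<Rightarrow> nat" where
  "dX n a l = (let b = UB_b n a l in
     Inf (hw (2*n) ` (kern n (2*n) (HX n a b) - rowsp n (2*n) (HZ n a b))))"

definition UB_dist :: "nat \<Rightarrow> bit poly \<Rightarrow> nat \<Rightarrow> nat" where
  "UB_dist n a l = min (dX n a l) (dZ n a l)"

end

theory Submission
  imports Defs
begin

lemma xn1_coeff: "coeff (xn1 n) k = (if k = n then 1 else 0) - (if k = 0 then 1 else 0)"
  by (simp add: xn1_def coeff_monom)

lemma degree_xn1: "n \<ge> 1 \<Longrightarrow> degree (xn1 n) = n"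
proof -
  assume n: "n \<ge> 1"
  have "coeff (xn1 n) n \<noteq> 0" using n by (simp add: xn1_coeff)
  hence "n \<le> degree (xn1 n)" by (rule le_degree)
  moreover have "degree (xn1 n) \<le> n"
    by (rule degree_le) (auto simp: xn1_coeff)
  ultimately show ?thesis by simp
qed

lemma xn1_nz: "n \<ge> 1 \<Longrightarrow> xn1 n \<noteq> 0"
  using degree_xn1 by fastforce

lemma degree_rep: "n \<ge> 1 \<Longrightarrow> degree (rep n g) < n \<or> rep n g = 0"
  unfolding rep_def using degree_mod_less[OF xn1_nz, of n g] degree_xn1 by auto

lemma coeff_rep_ge: "n \<ge> 1 \<Longrightarrow> k \<ge> n \<Longrightarrow> coeff (rep n g) k = 0"
  using degree_rep[of n g] by (metis coeff_0 coeff_eq_0 le_less_trans leD leI)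

lemma rep_rep: "rep n (rep n g) = rep n g"
  by (simp add: rep_def)

lemma rep_small: "n \<ge> 1 \<Longrightarrow> degree g < n \<Longrightarrow> rep n g = g"
  unfolding rep_def by (rule mod_poly_less) (simp add: degree_xn1)

lemma rep_add: "rep n (f + g) = rep n f + rep n g"
  by (simp add: rep_def poly_mod_add_left)

lemma rep_smult: "rep n (smult c f) = smult c (rep n f)"
  by (simp add: rep_def mod_smult_left)

lemma rep_0[simp]: "rep n 0 = 0"
  by (simp add: rep_def)

lemma rep_sum: "rep n (\<Sum>i\<in>S. f i) = (\<Sum>i\<in>S. rep n (f i))"
  by (induction S rule: infinite_finite_induct) (auto simp: rep_add)

lemma rep_mult: "rep n (f * g) = rep n (rep n f * rep n g)"
  by (simp add: rep_def mod_mult_eq)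

lemma rep_eq_iff: "rep n f = rep n g \<longleftrightarrow> xn1 n dvd f - g"
  by (simp add: rep_def mod_eq_dvd_iff)

lemma rep_zero_iff: "rep n f = 0 \<longleftrightarrow> xn1 n dvd f"
  by (simp add: rep_def dvd_eq_mod_eq_0)

lemma wt_rep: "wt n (rep n g) = wt n g"
  by (simp add: wt_def rep_rep)

lemma xn1_dvd_pow: "xn1 n dvd (monom 1 n) ^ q - 1"
proof (induction q)
  case (Suc q)
  have "(monom 1 n :: bit poly) ^ Suc q - 1 = monom 1 n * ((monom 1 n) ^ q - 1) + xn1 n"
    by (simp add: xn1_def algebra_simps)
  thus ?case using Suc by simp
qed simp

lemma rep_monom: "n \<ge> 1 \<Longrightarrow> rep n (monom 1 k) = monom 1 (k mod n)"
proof -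
  assume n: "n \<ge> 1"
  have e: "(monom 1 k :: bit poly) = monom 1 (k mod n) * (monom 1 n) ^ (k div n)"
    by (simp add: monom_power mult_monom mult.commute)
  have "xn1 n dvd monom 1 (k mod n) * ((monom 1 n) ^ (k div n) - 1)"
    using xn1_dvd_pow by (rule dvd_mult)
  hence "rep n (monom 1 k) = rep n (monom 1 (k mod n))"
    unfolding rep_eq_iff e by (simp add: algebra_simps)
  also have "\<dots> = monom 1 (k mod n)"
    using n by (intro rep_small) (auto intro: le_less_trans[OF degree_monom_le])
  finally show ?thesis .
qed

lemma wt_sum_monom:
  assumes n: "n \<ge> 1" and fin: "finite S"
  shows "wt n (\<Sum>i\<in>S. monom 1 (e i)) \<le> card S"
proof -
  have r: "rep n (\<Sum>i\<in>S. monom 1 (e i)) = (\<Sum>i\<in>S. monom 1 (e i mod n))"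
    by (simp add: rep_sum) (rule sum.cong, simp, rule rep_monom[OF n])
  have "{j. j < n \<and> coeff (rep n (\<Sum>i\<in>S. monom 1 (e i))) j \<noteq> 0} \<subseteq> (\<lambda>i. e i mod n) ` S"
  proof
    fix j assume "j \<in> {j. j < n \<and> coeff (rep n (\<Sum>i\<in>S. monom 1 (e i))) j \<noteq> 0}"
    hence "(\<Sum>i\<in>S. coeff (monom 1 (e i mod n)) j) \<noteq> (0::bit)"
      by (simp add: r coeff_sum)
    then obtain i where "i \<in> S" "coeff (monom (1::bit) (e i mod n)) j \<noteq> 0"
      by (meson sum.neutral)
    thus "j \<in> (\<lambda>i. e i mod n) ` S" by (auto simp: coeff_monom split: if_splits)
  qed
  hence "wt n (\<Sum>i\<in>S. monom 1 (e i)) \<le> card ((\<lambda>i. e i mod n) ` S)"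
    unfolding wt_def by (intro card_mono) (auto simp: fin)
  also have "\<dots> \<le> card S" by (rule card_image_le[OF fin])
  finally show ?thesis .
qed

definition supp :: "nat \<Rightarrow> bit poly \<Rightarrow> nat set" where
  "supp n g = {i. i < n \<and> coeff (rep n g) i \<noteq> 0}"

lemma wt_supp: "wt n g = card (supp n g)"
  by (simp add: wt_def supp_def)

lemma finite_supp: "finite (supp n g)"
  by (simp add: supp_def)

lemma rep_as_sum: assumes n: "n \<ge> 1"
  shows "rep n g = (\<Sum>i\<in>supp n g. monom 1 i)"
proof -
  have "rep n g = (\<Sum>i<n. monom (coeff (rep n g) i) i)"
  proof (cases "rep n g = 0")
    case True thus ?thesis by simp
  next
    case False
    hence "degree (rep n g) < n" using degree_rep[OF n] by auto
    hence "(\<Sum>i\<le>n - 1. monom (coeff (rep n g) i) i) = rep n g"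
      by (intro poly_as_sum_of_monoms') auto
    moreover have "{..n - 1} = {..<n}" using n by auto
    ultimately show ?thesis by simp
  qed
  also have "\<dots> = (\<Sum>i\<in>supp n g. monom (coeff (rep n g) i) i)"
    by (rule sum.mono_neutral_right) (auto simp: supp_def)
  also have "\<dots> = (\<Sum>i\<in>supp n g. monom 1 i)"
    by (rule sum.cong) (auto simp: supp_def)
  finally show ?thesis .
qed

lemma wt_mult: assumes n: "n \<ge> 1" shows "wt n (f * g) \<le> wt n f * wt n g"
proof -
  have "rep n f * rep n g = (\<Sum>i\<in>supp n f. \<Sum>j\<in>supp n g. monom 1 i * monom 1 j)"
    by (simp add: rep_as_sum[OF n] sum_product)
  also have "\<dots> = (\<Sum>p\<in>supp n f \<times> supp n g. monom 1 (fst p + snd p))"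
    by (simp add: sum.cartesian_product mult_monom case_prod_beta)
  finally have e: "rep n f * rep n g = \<dots>" .
  have "wt n (f * g) = wt n (rep n f * rep n g)"
    by (metis rep_mult wt_rep)
  also have "\<dots> \<le> card (supp n f \<times> supp n g)"
    unfolding e by (rule wt_sum_monom[OF n]) (simp add: finite_supp)
  also have "\<dots> = wt n f * wt n g" by (simp add: wt_supp card_cartesian_product)
  finally show ?thesis .
qed

lemma bitpoly_add_self: "(p :: bit poly) + p = 0"
proof (rule poly_eqI)
  fix i show "coeff (p + p) i = coeff 0 i"
    unfolding coeff_add by (cases "coeff p i") auto
qed

lemma bitpoly_sq_add: "((p :: bit poly) + q)^2 = p^2 + q^2"
proof -
  have "(p + q)^2 = p^2 + q^2 + (p*q + p*q)" by (simp add: power2_eq_square algebra_simps)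
  thus ?thesis by (simp add: bitpoly_add_self)
qed

lemma bitpoly_sq_sum: "(\<Sum>i\<in>S. (f i :: bit poly))^2 = (\<Sum>i\<in>S. (f i)^2)"
  by (induction S rule: infinite_finite_induct) (auto simp: bitpoly_sq_add)

lemma wt_sq: assumes n: "n \<ge> 1" shows "wt n (f^2) \<le> wt n f"
proof -
  have e: "(rep n f)^2 = (\<Sum>i\<in>supp n f. monom 1 (2*i))"
    by (simp add: rep_as_sum[OF n] bitpoly_sq_sum monom_power mult.commute)
  have "wt n (f^2) = wt n ((rep n f)^2)"
    by (metis power2_eq_square rep_mult wt_rep)
  also have "\<dots> \<le> card (supp n f)"
    unfolding e by (rule wt_sum_monom[OF n]) (simp add: finite_supp)
  finally show ?thesis by (simp add: wt_supp)
qed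

lemma wt_pow2: assumes n: "n \<ge> 1" shows "wt n (f^(2^k)) \<le> wt n f"
proof (induction k)
  case (Suc k)
  have "f^(2^Suc k) = (f^(2^k))^2" by (simp add: power_mult[symmetric] mult.commute)
  thus ?case using wt_sq[OF n, of "f^(2^k)"] Suc by simp
qed simp

lemma wt_one: assumes n: "n \<ge> 1" shows "wt n 1 \<le> 1"
  using wt_sum_monom[OF n, of "{0}" "\<lambda>i. i"] by (simp add: one_pCons)

lemma wt_pow: assumes n: "n \<ge> 1" shows "wt n (f^(2^l - 1)) \<le> wt n f ^ l"
proof (induction l)
  case 0 thus ?case using wt_one[OF n] by simp
next
  case (Suc l)
  have "(2::nat)^Suc l - 1 = (2^l - 1) + 2^l" by simp
  hence "f^(2^Suc l - 1) = f^(2^l - 1) * f^(2^l)" by (metis power_add)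
  hence "wt n (f^(2^Suc l - 1)) \<le> wt n (f^(2^l - 1)) * wt n (f^(2^l))"
    using wt_mult[OF n] by simp
  also have "\<dots> \<le> wt n f ^ l * wt n f"
    using Suc wt_pow2[OF n] by (intro mult_mono) auto
  finally show ?case by (simp add: mult.commute)
qed

declare add_bit_eq_xor[simp del] mult_bit_eq_and[simp del]

lemma circ_sum: "(\<Sum>i<n. c i * Circ n g i j) = coeff (rep n ((\<Sum>i<n. monom (c i) i) * g)) j"
proof -
  have "(\<Sum>i<n. c i * Circ n g i j) = (\<Sum>i<n. coeff (rep n (monom (c i) i * g)) j)"
  proof (rule sum.cong)
    fix i
    have "monom (c i) i * g = smult (c i) (monom 1 i * g)" by (metis mult_smult_left smult_monom mult.right_neutral)
    thus "c i * Circ n g i j = coeff (rep n (monom (c i) i * g)) j"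
      by (simp add: Circ_def rep_smult)
  qed simp
  also have "\<dots> = coeff (rep n ((\<Sum>i<n. monom (c i) i) * g)) j"
    by (simp add: sum_distrib_right rep_sum coeff_sum)
  finally show ?thesis .
qed

lemma sum_monoms_rep: assumes n: "n \<ge> 1" and u: "rep n u = u"
  shows "(\<Sum>i<n. monom (coeff u i) i) = u"
proof (rule poly_eqI)
  fix k
  have "coeff (\<Sum>i<n. monom (coeff u i) i) k = (\<Sum>i<n. if k = i then coeff u i else 0)"
    by (simp add: coeff_sum coeff_monom eq_commute)
  also have "\<dots> = (if k < n then coeff u k else 0)" by (simp add: sum.delta)
  also have "\<dots> = coeff u k" using coeff_rep_ge[OF n, of k u] u by auto
  finally show "coeff (\<Sum>i<n. monom (coeff u i) i) k = coeff u k" .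
qed

lemma sum_split2: "(\<Sum>j<n+(m::nat). f j) = (\<Sum>j<n. f j) + (\<Sum>j<m. f (n+j))"
  by (induction m) (auto simp: add_ac)

lemma eq_by_coeffs: assumes n: "n \<ge> 1" and "rep n p = p" "rep n q = q"
  and "\<forall>j<n. coeff p j = coeff q j" shows "p = q"
proof (rule poly_eqI)
  fix k show "coeff p k = coeff q k"
    using assms coeff_rep_ge[OF n, of k p] coeff_rep_ge[OF n, of k q]
    by (cases "k < n") auto
qed

definition mkv :: "nat \<Rightarrow> bit poly \<Rightarrow> bit poly \<Rightarrow> nat \<Rightarrow> bit" where
  "mkv n u w j = (if j < n then coeff u j else if j < 2*n then coeff w (j - n) else 0)"


lemma mkv_kern:
  assumes n: "n \<ge> 1" and u: "rep n u = u" and w: "rep n w = w"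
    and z: "rep n (u * b + w * a) = 0"
  shows "mkv n u w \<in> kern n (2*n) (HZ n a b)"
  unfolding kern_def
proof (intro CollectI conjI allI impI)
  show "mkv n u w \<in> vecs (2*n)" by (simp add: vecs_def mkv_def)
  fix i assume "i < n"
  have s1: "(\<Sum>j<n. HZ n a b i j * mkv n u w j) = (\<Sum>j<n. coeff u j * Circ n b j i)"
    by (rule sum.cong) (simp_all add: HZ_def mkv_def mult.commute)
  have s2: "(\<Sum>j<n. HZ n a b i (n+j) * mkv n u w (n+j)) = (\<Sum>j<n. coeff w j * Circ n a j i)"
    by (rule sum.cong) (simp_all add: HZ_def mkv_def mult.commute)
  have "(\<Sum>j<2*n. HZ n a b i j * mkv n u w j) =
        (\<Sum>j<n. coeff u j * Circ n b j i) + (\<Sum>j<n. coeff w j * Circ n a j i)"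
    unfolding mult_2 sum_split2 s1 s2 ..
  also have "\<dots> = coeff (rep n (u * b)) i + coeff (rep n (w * a)) i"
    unfolding circ_sum sum_monoms_rep[OF n u] sum_monoms_rep[OF n w] ..
  also have "\<dots> = coeff (rep n (u * b + w * a)) i"
    unfolding rep_add coeff_add ..
  finally show "(\<Sum>j<2*n. HZ n a b i j * mkv n u w j) = 0" using z by simp
qed


lemma mkv_rowsp:
  assumes n: "n \<ge> 1" and u: "rep n u = u" and w: "rep n w = w"
    and r: "mkv n u w \<in> rowsp n (2*n) (HX n a b)"
  shows "\<exists>C. rep n (C * a) = u \<and> rep n (C * b) = w"
proof -
  from r obtain c where c: "\<forall>j<2*n. mkv n u w j = (\<Sum>i<n. c i * HX n a b i j)"
    unfolding rowsp_def by blast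
  define C where "C = (\<Sum>i<n. monom (c i) i)"
  have "\<forall>j<n. coeff (rep n (C * a)) j = coeff u j"
  proof (intro allI impI)
    fix j assume j: "j < n"
    have "coeff u j = mkv n u w j" using j by (simp add: mkv_def)
    also have "\<dots> = (\<Sum>i<n. c i * HX n a b i j)" by (rule c[rule_format]) (use j in simp)
    also have "\<dots> = (\<Sum>i<n. c i * Circ n a i j)" unfolding HX_def using j by simp
    also have "\<dots> = coeff (rep n (C * a)) j" unfolding circ_sum C_def ..
    finally show "coeff (rep n (C * a)) j = coeff u j" by simp
  qed
  hence 1: "rep n (C * a) = u" by (rule eq_by_coeffs[OF n rep_rep u])
  have "\<forall>j<n. coeff (rep n (C * b)) j = coeff w j"
  proof (intro allI impI)
    fix j assume j: "j < n"
    have "coeff w j = mkv n u w (n + j)" using j by (simp add: mkv_def)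
    also have "\<dots> = (\<Sum>i<n. c i * HX n a b i (n + j))" by (rule c[rule_format]) (use j in simp)
    also have "\<dots> = (\<Sum>i<n. c i * Circ n b i j)" unfolding HX_def using j by simp
    also have "\<dots> = coeff (rep n (C * b)) j" unfolding circ_sum C_def ..
    finally show "coeff (rep n (C * b)) j = coeff w j" by simp
  qed
  hence 2: "rep n (C * b) = w" by (rule eq_by_coeffs[OF n rep_rep w])
  from 1 2 show ?thesis by blast
qed

lemma Inf_nat_le: "x \<in> S \<Longrightarrow> Inf S \<le> (x::nat)"
  by (rule cInf_lower) (auto intro: bdd_belowI[of _ 0])

lemma rep_mult_right: "rep n (f * rep n g) = rep n (f * g)"
  by (simp add: rep_def mod_mult_right_eq)


theorem corollary2:
  fixes n l :: nat and a :: "bit poly"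
  assumes "n \<ge> 2"
    and "a dvd xn1 n"
    and "1 \<le> degree a" and "degree a < n"
    and "l \<ge> 1"
  shows "UB_dist n a l \<le> min (wt n a ^ l + 1) (wt n (xn1 n div a))"
proof -
  have n: "n \<ge> 1" using assms(1) by simp
  define h where "h = xn1 n div a"
  define b where "b = UB_b n a l"
  define K where "K = kern n (2*n) (HZ n a b) - rowsp n (2*n) (HX n a b)"
  have dZ: "dZ n a l = Inf (hw (2*n) ` K)" by (simp add: dZ_def K_def b_def Let_def)
  have anz: "a \<noteq> 0" using assms(3) by auto
  have ah: "a * h = xn1 n" unfolding h_def using assms(2) by (rule dvd_mult_div_cancel)
  have hnz: "h \<noteq> 0" using ah xn1_nz[OF n] by auto
  have "degree a + degree h = n" using degree_mult_eq[OF anz hnz] ah degree_xn1[OF n] by simp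
  hence degh: "degree h < n" using assms(3) by simp
  have reph: "rep n h = h" by (rule rep_small[OF n degh])
  have t: "(2::nat)^l = Suc (2^l - 1)" by simp
  have pwa: "a^(2^l) = a * a^(2^l - 1)"
  proof -
    have "a^(Suc (2^l - 1)) = a * a^(2^l - 1)" by (rule power_Suc)
    thus ?thesis by (simp only: t[symmetric])
  qed
  have bdef: "b = rep n (a^(2^l))" by (simp add: b_def UB_b_def)
  have v1K: "mkv n 0 h \<in> K"
  proof -
    have "mkv n 0 h \<in> kern n (2*n) (HZ n a b)"
      by (rule mkv_kern[OF n _ reph]) (simp_all add: rep_zero_iff ah[symmetric] mult.commute)
    moreover have "mkv n 0 h \<notin> rowsp n (2*n) (HX n a b)"
    proof
      assume "mkv n 0 h \<in> rowsp n (2*n) (HX n a b)"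
      from mkv_rowsp[OF n _ reph this] obtain C where
        C1: "rep n (C * a) = 0" and C2: "rep n (C * b) = h" by auto
      have "a * h dvd a * C" using C1 by (simp add: rep_zero_iff ah mult.commute)
      hence "h dvd C" using anz by simp
      then obtain k where k: "C = h * k" by (auto elim: dvdE)
      have "C * a^(2^l) = (a * h) * (k * a^(2^l - 1))"
      proof -
        note pw = pwa
        show ?thesis unfolding k pw by (simp add: algebra_simps)
      qed
      hence "rep n (C * a^(2^l)) = 0" by (simp add: rep_zero_iff ah)
      hence "h = 0" using C2 by (simp add: bdef rep_mult_right)
      thus False using hnz by simp
    qed
    ultimately show ?thesis by (simp add: K_def)
  qed
  have "{j. j < 2*n \<and> mkv n 0 h j \<noteq> 0} = (\<lambda>j. n + j) ` {j. j < n \<and> coeff h j \<noteq> 0}"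
  proof (rule set_eqI, rule iffI)
    fix x assume x: "x \<in> {j. j < 2*n \<and> mkv n 0 h j \<noteq> 0}"
    hence "\<not> x < n" "x < 2*n" "coeff h (x - n) \<noteq> 0" by (auto simp: mkv_def split: if_splits)
    thus "x \<in> (\<lambda>j. n + j) ` {j. j < n \<and> coeff h j \<noteq> 0}"
      by (intro image_eqI[of _ _ "x - n"]) auto
  qed (auto simp: mkv_def)
  hence hw1: "hw (2*n) (mkv n 0 h) = wt n h"
    unfolding hw_def wt_def reph by (simp add: card_image)
  define w where "w = rep n (a^(2^l - 1))"
  have repw: "rep n w = w" by (simp add: w_def rep_rep)
  have rep1: "rep n 1 = 1" using assms(1) by (intro rep_small) auto
  have v2K: "mkv n 1 w \<in> K"
  proof -
    have e1: "1 * b + w * a = b + a * w" by (simp add: mult.commute)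
    have e2: "rep n b = rep n (a^(2^l))" by (simp only: bdef rep_rep)
    have e3: "rep n (a * w) = rep n (a * a^(2^l - 1))" by (simp only: w_def rep_mult_right)
    have "rep n (1 * b + w * a) = rep n (a^(2^l)) + rep n (a * a^(2^l - 1))"
      by (simp only: e1 rep_add e2 e3)
    also have "\<dots> = rep n (a^(2^l)) + rep n (a^(2^l))" by (simp only: pwa[symmetric])
    also have "\<dots> = 0" by (rule bitpoly_add_self)
    finally have "rep n (1 * b + w * a) = 0" .
    hence "mkv n 1 w \<in> kern n (2*n) (HZ n a b)"
      by (rule mkv_kern[OF n rep1 repw])
    moreover have "mkv n 1 w \<notin> rowsp n (2*n) (HX n a b)"
    proof
      assume "mkv n 1 w \<in> rowsp n (2*n) (HX n a b)"
      from mkv_rowsp[OF n rep1 repw this] obtain C where C1: "rep n (C * a) = 1" by auto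
      hence "rep n (C * a) = rep n 1" by (simp add: rep1)
      hence "xn1 n dvd C * a - 1" by (simp add: rep_eq_iff)
      hence "a dvd C * a - 1" using assms(2) dvd_trans by blast
      moreover have "a dvd C * a" by simp
      ultimately have "a dvd C * a - (C * a - 1)" by (rule dvd_diff[rotated])
      hence "a dvd 1" by simp
      hence "degree a = 0" using is_unit_iff_degree[OF anz] by simp
      thus False using assms(3) by simp
    qed
    ultimately show ?thesis by (simp add: K_def)
  qed
  have "{j. j < 2*n \<and> mkv n 1 w j \<noteq> 0} \<subseteq> insert 0 ((\<lambda>j. n + j) ` supp n w)"
  proof
    fix x assume x: "x \<in> {j. j < 2*n \<and> mkv n 1 w j \<noteq> 0}"
    show "x \<in> insert 0 ((\<lambda>j. n + j) ` supp n w)"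
    proof (cases "x < n")
      case True
      hence "coeff (1::bit poly) x \<noteq> 0" using x by (simp add: mkv_def)
      hence "x = 0" by (simp add: coeff_1 split: if_splits)
      thus ?thesis by simp
    next
      case False
      hence "coeff w (x - n) \<noteq> 0" "x < 2*n" using x by (auto simp: mkv_def)
      hence "x - n \<in> supp n w" using False by (auto simp: supp_def repw)
      thus ?thesis using False by (intro insertI2 image_eqI[of _ _ "x - n"]) auto
    qed
  qed
  hence "hw (2*n) (mkv n 1 w) \<le> card (insert 0 ((\<lambda>j. n + j) ` supp n w))"
    unfolding hw_def by (intro card_mono) (auto simp: finite_supp)
  also have "\<dots> \<le> Suc (card ((\<lambda>j. n + j) ` supp n w))"
    by (simp add: card_insert_le_m1 finite_supp card_insert_if)
  also have "\<dots> \<le> Suc (wt n w)" by (simp add: wt_supp card_image_le finite_supp)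
  also have "wt n w = wt n (a^(2^l - 1))" by (simp add: w_def wt_rep)
  also have "\<dots> \<le> wt n a ^ l" by (rule wt_pow[OF n])
  finally have hw2: "hw (2*n) (mkv n 1 w) \<le> wt n a ^ l + 1" by simp
  have "dZ n a l \<le> hw (2*n) (mkv n 0 h)" unfolding dZ by (rule Inf_nat_le) (use v1K in blast)
  hence z1: "dZ n a l \<le> wt n h" using hw1 by simp
  have "dZ n a l \<le> hw (2*n) (mkv n 1 w)" unfolding dZ by (rule Inf_nat_le) (use v2K in blast)
  hence z2: "dZ n a l \<le> wt n a ^ l + 1" using hw2 by simp
  have "UB_dist n a l \<le> dZ n a l" by (simp add: UB_dist_def)
  thus ?thesis using z1 z2 by (simp add: h_def)
qed

end
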